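(* Let $X\in\mathbb{R}^{m\times n}$, $\lambda>0$, and let $f:\mathbb{R}^{m\times n}\to\mathbb{R}$ be an arbitrary function. Consider the original R-PCA problem $$\min_{A,E\in\mathbb{R}^{m\times n}} \operatorname{rank}(A)+\lambda f(E)\quad\text{s.t.}\quad X=A+E, \tag{P}$$ and the original R-LatLRR problem $$\min_{Z\in\mathbb{R}^{n\times n},\,L\in\mathbb{R}^{m\times m},\,E\in\mathbb{R}^{m\times n}} \operatorname{rank}(Z)+\operatorname{rank}(L)+\lambda f(E)\quad\text{s.t.}\quad X-E=(X-E)Z+L(X-E). \tag{T}$$ (i) Let $(A^*,E^* )$ be any optimal solution of (P), let $r=\operatorname{rank}(A^* )$, and let $A^*=U_{A^*}\Sigma_{A^*}V_{A^*}^T$ be its skinny SVD. Let $\widetilde W\in\mathbb{R}^{r\times r}$ be any idempotent matrix ($\widetilde W^2=\widetilde W$), and let $S_1\in\mathbb{R}^{n\times r}$, $S_2\in\mathbb{R}^{r\times m}$ be any matrices satisfying $V_{A^*}^TS_1=0$, $S_2U_{A^*}=0$, $\operatorname{rank}(S_1)\le\operatorname{rank}(\widetilde W)$ and $\operatorname{rank}(S_2)\le\operatorname{rank}(I-\widetilde W)$. Then $(Z^*,L^*,E^* )$ is a minimizer of (T), where $$Z^*=V_{A^*}\widetilde WV_{A^*}^T+S_1\widetilde WV_{A^*}^T,\qquad L^*=U_{A^*}\Sigma_{A^*}(I-\widetilde W)\Sigma_{A^*}^{-1}U_{A^*}^T+U_{A^*}\Sigma_{A^*}(I-\widetilde W)S_2.$$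 (ii) Conversely, if $(Z^*,L^*,E^* )$ is any optimal solution of (T), then $(X-E^*,E^* )$ is a minimizer of (P).
   Context: The skinny SVD of a matrix $A$ of rank $r$ is $A=U_A\Sigma_AV_A^T$ with $U_A,V_A$ having $r$ orthonormal columns and $\Sigma_A$ an $r\times r$ diagonal matrix with positive diagonal entries. $I$ denotes the identity matrix of the appropriate size. *)

theory Defs
  imports "Jordan_Normal_Form.DL_Rank" "Jordan_Normal_Form.Matrix"
begin

definition rank_mat :: "real mat \<Rightarrow> nat" where
  "rank_mat A = vec_space.rank (dim_row A) A"

definition skinny_svd :: "nat \<Rightarrow> nat \<Rightarrow> nat \<Rightarrow> real mat \<Rightarrow> real mat \<Rightarrow> real mat \<Rightarrow> real mat \<Rightarrow> bool" where
  "skinny_svd m n r A U S V \<longleftrightarrow>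
     A \<in> carrier_mat m n \<and> U \<in> carrier_mat m r \<and> S \<in> carrier_mat r r \<and> V \<in> carrier_mat n r \<and>
     transpose_mat U * U = 1\<^sub>m r \<and> transpose_mat V * V = 1\<^sub>m r \<and>
     diagonal_mat S \<and> (\<forall>i<r. S $$ (i,i) > 0) \<and>
     A = U * S * transpose_mat V"

definition diag_inv :: "real mat \<Rightarrow> real mat" where
  "diag_inv S = mat (dim_row S) (dim_col S) (\<lambda>(i,j). if i = j then 1 / S $$ (i,i) else 0)"

definition rpca_feasible :: "nat \<Rightarrow> nat \<Rightarrow> real mat \<Rightarrow> real mat \<Rightarrow> real mat \<Rightarrow> bool" where
  "rpca_feasible m n X A E \<longleftrightarrow> A \<in> carrier_mat m n \<and> E \<in> carrier_mat m n \<and> X = A + E"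

definition rpca_obj :: "real \<Rightarrow> (real mat \<Rightarrow> real) \<Rightarrow> real mat \<Rightarrow> real mat \<Rightarrow> real" where
  "rpca_obj lam f A E = real (rank_mat A) + lam * f E"

definition rpca_opt :: "nat \<Rightarrow> nat \<Rightarrow> real mat \<Rightarrow> real \<Rightarrow> (real mat \<Rightarrow> real) \<Rightarrow> real mat \<Rightarrow> real mat \<Rightarrow> bool" where
  "rpca_opt m n X lam f A E \<longleftrightarrow> rpca_feasible m n X A E \<and>
     (\<forall>A' E'. rpca_feasible m n X A' E' \<longrightarrow> rpca_obj lam f A E \<le> rpca_obj lam f A' E')"

definition latlrr_feasible :: "nat \<Rightarrow> nat \<Rightarrow> real mat \<Rightarrow> real mat \<Rightarrow> real mat \<Rightarrow> real mat \<Rightarrow> bool" where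
  "latlrr_feasible m n X Z L E \<longleftrightarrow> Z \<in> carrier_mat n n \<and> L \<in> carrier_mat m m \<and> E \<in> carrier_mat m n \<and>
     X - E = (X - E) * Z + L * (X - E)"

definition latlrr_obj :: "real \<Rightarrow> (real mat \<Rightarrow> real) \<Rightarrow> real mat \<Rightarrow> real mat \<Rightarrow> real mat \<Rightarrow> real" where
  "latlrr_obj lam f Z L E = real (rank_mat Z) + real (rank_mat L) + lam * f E"

definition latlrr_opt :: "nat \<Rightarrow> nat \<Rightarrow> real mat \<Rightarrow> real \<Rightarrow> (real mat \<Rightarrow> real) \<Rightarrow> real mat \<Rightarrow> real mat \<Rightarrow> real mat \<Rightarrow> bool" where
  "latlrr_opt m n X lam f Z L E \<longleftrightarrow> latlrr_feasible m n X Z L E \<and>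
     (\<forall>Z' L' E'. latlrr_feasible m n X Z' L' E' \<longrightarrow> latlrr_obj lam f Z L E \<le> latlrr_obj lam f Z' L' E')"

end

theory Submission
  imports Defs
begin

context vec_space begin
lemma rank_le_span:
  assumes A: "A \<in> carrier_mat n nc" and B: "B \<in> carrier_mat n k"
  and sub: "set (cols A) \<subseteq> span (set (cols B))"
  shows "rank A \<le> k"
proof -
  obtain S where S: "maximal S (\<lambda>T. T \<subseteq> set (cols A) \<and> lin_indpt T)"
    using maximal_exists[of "(\<lambda>T. T \<subseteq> set (cols A) \<and> lin_indpt T)" "card (set (cols A))" "{}"]
    by (meson List.finite_set card_mono empty_iff empty_subsetI finite_lin_indpt2 rev_finite_subset)
  have r: "rank A = card S" using rank_card_indpt[OF A S] .
  have SA: "S \<subseteq> set (cols A)" "lin_indpt S" using S unfolding maximal_def by auto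
  have fS: "finite S" using SA(1) finite_subset by blast
  have Bc: "set (cols B) \<subseteq> carrier_vec n" using B cols_dim by blast
  have "S \<subseteq> span (set (cols B))" using SA(1) sub by auto
  from replacement[OF fS _ Bc SA(2) this]
  have "card S \<le> card (set (cols B))" by fastforce
  also have "\<dots> \<le> k" using B by (metis card_length cols_length carrier_matD(2))
  finally show ?thesis using r by simp
qed

lemma mult_vec_in_span:
  assumes B: "B \<in> carrier_mat n k" and v: "v \<in> carrier_vec k"
  shows "B *\<^sub>v v \<in> span (set (cols B))"
proof -
  have Bc: "set (cols B) \<subseteq> carrier_vec n" using B cols_dim by blast
  have "B *\<^sub>v v = mat_of_cols n (cols B) *\<^sub>v vec (length (cols B)) (\<lambda>i. v $ i)"
    using B v by (intro arg_cong2[where f="(*\<^sub>v)"]) (auto simp: mat_of_cols_cols[of B, simplified])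
  also have "\<dots> = lincomb_list (\<lambda>i. v $ i) (cols B)"
    by (rule lincomb_list_as_mat_mult[symmetric]) (use Bc in auto)
  also have "\<dots> \<in> span_list (cols B)" unfolding span_list_def by auto
  finally show ?thesis using span_list_as_span[OF Bc] by simp
qed

lemma rank_mult_le_inner:
  assumes B: "B \<in> carrier_mat n k" and C: "C \<in> carrier_mat k nc"
  shows "rank (B * C) \<le> k"
proof (rule rank_le_span[OF _ B])
  show "B * C \<in> carrier_mat n nc" using B C by auto
  show "set (cols (B * C)) \<subseteq> span (set (cols B))"
  proof
    fix x assume "x \<in> set (cols (B * C))"
    then obtain j where j: "j < nc" "x = col (B * C) j" using B C
      by (metis carrier_matD(2) cols_length cols_nth in_set_conv_nth index_mult_mat(3))
    then have "x = B *\<^sub>v col C j" using col_mult2[OF B C j(1)] by simp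
    then show "x \<in> span (set (cols B))" using mult_vec_in_span[OF B, of "col C j"] C j by auto
  qed
qed

lemma rank_factor:
  assumes A: "A \<in> carrier_mat n nc"
  shows "\<exists>B C. B \<in> carrier_mat n (rank A) \<and> C \<in> carrier_mat (rank A) nc \<and> A = B * C \<and>
     (\<forall>v \<in> carrier_vec (rank A). B *\<^sub>v v = 0\<^sub>v n \<longrightarrow> v = 0\<^sub>v (rank A))"
proof -
  obtain S where S: "maximal S (\<lambda>T. T \<subseteq> set (cols A) \<and> lin_indpt T)"
    using maximal_exists[of "(\<lambda>T. T \<subseteq> set (cols A) \<and> lin_indpt T)" "card (set (cols A))" "{}"]
    by (meson List.finite_set card_mono empty_iff empty_subsetI finite_lin_indpt2 rev_finite_subset)
  have r: "rank A = card S" using rank_card_indpt[OF A S] .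
  have SA: "S \<subseteq> set (cols A)" "lin_indpt S" using S unfolding maximal_def by auto
  have fS: "finite S" using SA(1) finite_subset by blast
  have Ac: "set (cols A) \<subseteq> carrier_vec n" using A cols_dim by blast
  have Sc: "S \<subseteq> carrier_vec n" using SA(1) Ac by auto
  have colsp: "set (cols A) \<subseteq> span S"
  proof
    fix s assume s: "s \<in> set (cols A)"
    show "s \<in> span S"
    proof (rule ccontr)
      assume ns: "s \<notin> span S"
      have sS: "s \<notin> S" using ns Sc span_mem by blast
      have sc: "s \<in> carrier_vec n" using s Ac by auto
      have "lin_indpt (S \<union> {s})" using lin_dep_iff_in_span[OF Sc SA(2) sc sS] ns by simp
      hence "S \<union> {s} \<subseteq> set (cols A) \<and> lin_indpt (S \<union> {s})" using SA(1) s by auto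
      moreover have "S \<subseteq> S \<union> {s}" by auto
      ultimately have "S = S \<union> {s}" using S unfolding maximal_def by blast
      thus False using sS by auto
    qed
  qed
  obtain ss where ss: "set ss = S" "distinct ss" using finite_distinct_list[OF fS] by blast
  have len: "length ss = rank A" using r ss distinct_card by metis
  define k where "k = rank A"
  define B where "B = mat_of_cols n ss"
  have Bc: "B \<in> carrier_mat n k" unfolding B_def k_def using len mat_of_cols_carrier(1)[of n ss] by metis
  have colsB: "cols B = ss" unfolding B_def using ss Sc by simp
  have spl: "span S = span_list ss" using span_list_as_span[of ss] ss Sc by simp
  have "\<forall>j<nc. \<exists>c. col A j = B *\<^sub>v vec k c"
  proof (intro allI impI)
    fix j assume j: "j < nc"
    have "col A j \<in> set (cols A)" using j A by (metis carrier_matD(2) cols_length cols_nth nth_mem)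
    hence "col A j \<in> span_list ss" using colsp spl by auto
    then obtain c where "col A j = lincomb_list c ss" by (auto elim: in_span_listE)
    also have "\<dots> = B *\<^sub>v vec k c" unfolding B_def k_def len[symmetric]
      by (rule lincomb_list_as_mat_mult) (use ss Sc in auto)
    finally show "\<exists>c. col A j = B *\<^sub>v vec k c" by blast
  qed
  then obtain cf where cf: "\<And>j. j < nc \<Longrightarrow> col A j = B *\<^sub>v vec k (cf j)" by metis
  define C where "C = mat k nc (\<lambda>(i,j). cf j i)"
  have Cc: "C \<in> carrier_mat k nc" unfolding C_def by simp
  have AB: "A = B * C"
  proof (rule mat_col_eqI)
    fix j assume "j < dim_col (B * C)"
    hence j: "j < nc" using Cc by simp
    have "col (B * C) j = B *\<^sub>v col C j" using col_mult2[OF Bc Cc j] .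
    also have "col C j = vec k (cf j)" unfolding C_def using j by simp
    finally show "col A j = col (B * C) j" using cf[OF j] by simp
  qed (use A Bc Cc in auto)
  have inj: "\<forall>v \<in> carrier_vec k. B *\<^sub>v v = 0\<^sub>v n \<longrightarrow> v = 0\<^sub>v k"
  proof (intro ballI impI)
    fix v assume v: "v \<in> carrier_vec k" and Bv: "B *\<^sub>v v = 0\<^sub>v n"
    show "v = 0\<^sub>v k"
    proof (rule ccontr)
      assume "v \<noteq> 0\<^sub>v k"
      from lin_depI[OF Bc v this Bv] colsB ss have "lin_dep S" by simp
      thus False using SA(2) by simp
    qed
  qed
  show ?thesis using Bc Cc AB inj unfolding k_def by blast
qed
end

declare minus_carrier_mat[simp]

lemma rank_mat_mult_inner:
  assumes "B \<in> carrier_mat m k" "C \<in> carrier_mat k n"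
  shows "rank_mat (B * C) \<le> k"
  using vec_space.rank_mult_le_inner[OF assms] assms unfolding rank_mat_def by simp

lemma rank_mat_factor:
  assumes A: "A \<in> carrier_mat m n"
  shows "\<exists>B C. B \<in> carrier_mat m (rank_mat A) \<and> C \<in> carrier_mat (rank_mat A) n \<and> A = B * C \<and>
     (\<forall>v \<in> carrier_vec (rank_mat A). B *\<^sub>v v = 0\<^sub>v m \<longrightarrow> v = 0\<^sub>v (rank_mat A))"
  using vec_space.rank_factor[OF A] A unfolding rank_mat_def by simp

lemma rank_mat_mult_left:
  assumes B: "B \<in> carrier_mat m k" and C: "C \<in> carrier_mat k n"
  shows "rank_mat (B * C) \<le> rank_mat B"
proof -
  obtain P Q where P: "P \<in> carrier_mat m (rank_mat B)" and Q: "Q \<in> carrier_mat (rank_mat B) k"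
    and BPQ: "B = P * Q" using rank_mat_factor[OF B] by blast
  have "B * C = P * (Q * C)" using BPQ P Q C by simp
  thus ?thesis using rank_mat_mult_inner[OF P, of "Q * C" n] Q C by simp
qed

lemma rank_mat_mult_right:
  assumes B: "B \<in> carrier_mat m k" and C: "C \<in> carrier_mat k n"
  shows "rank_mat (B * C) \<le> rank_mat C"
proof -
  obtain P Q where P: "P \<in> carrier_mat k (rank_mat C)" and Q: "Q \<in> carrier_mat (rank_mat C) n"
    and CPQ: "C = P * Q" using rank_mat_factor[OF C] by blast
  have "B * C = (B * P) * Q" using CPQ P Q B by simp
  thus ?thesis using rank_mat_mult_inner[of "B * P" m "rank_mat C" Q n] B P Q by simp
qed

lemma rank_mat_add:
  assumes "A \<in> carrier_mat m n" "B \<in> carrier_mat m n"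
  shows "rank_mat (A + B) \<le> rank_mat A + rank_mat B"
  using vec_space.rank_subadditive[OF assms] assms unfolding rank_mat_def by simp

lemma rank_mat_zero: "rank_mat (0\<^sub>m m n) = 0"
  using vec_space.rank_0I unfolding rank_mat_def by simp

lemma rank_mat_le_col:
  assumes "A \<in> carrier_mat m n" shows "rank_mat A \<le> n"
  using vec_space.rank_le_nc[OF assms] assms unfolding rank_mat_def by simp

lemma rank_mat_det:
  assumes "A \<in> carrier_mat k k" "det A \<noteq> 0" shows "rank_mat A = k"
  using vec_space.det_rank_iff[OF assms(1)] assms unfolding rank_mat_def by simp

lemma inverse_exists:
  assumes A: "(A :: real mat) \<in> carrier_mat k k" and d: "det A \<noteq> 0"
  shows "\<exists>B \<in> carrier_mat k k. B * A = 1\<^sub>m k \<and> A * B = 1\<^sub>m k"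
proof -
  from det_non_zero_imp_unit[OF A d, of "()"]
  obtain B where B: "B \<in> carrier_mat k k" "B * A = 1\<^sub>m k"
    unfolding Units_def ring_mat_def by auto
  moreover have "A * B = 1\<^sub>m k" using mat_mult_left_right_inverse[OF B(1) A B(2)] .
  ultimately show ?thesis by blast
qed

lemma rank_mat_det_iff:
  assumes "A \<in> carrier_mat k k" shows "det A \<noteq> 0 \<longleftrightarrow> rank_mat A = k"
  using vec_space.det_rank_iff[OF assms] assms unfolding rank_mat_def by simp

lemma mult_minus_distrib_mat':
  assumes A: "(A :: 'a :: ring mat) \<in> carrier_mat nr n" and B: "B \<in> carrier_mat n nc" and C: "C \<in> carrier_mat n nc"
  shows "A * (B - C) = A * B - A * C"
proof -
  have "A * (B - C) = A * (B + (- C))" using minus_add_uminus_mat[OF B C] by simp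
  also have "\<dots> = A * B + A * (- C)" using mult_add_distrib_mat[OF A B] C by simp
  also have "\<dots> = A * B - A * C"
    using minus_add_uminus_mat[of "A * B" nr nc "A * C"] A B C by simp
  finally show ?thesis .
qed

lemma idem_factor_det:
  assumes M: "M \<in> carrier_mat r r" and idem: "M * M = M"
    and P: "P \<in> carrier_mat r a" and Q: "Q \<in> carrier_mat a r" and MPQ: "M = P * Q"
    and ra: "rank_mat M = a"
  shows "det (Q * P) \<noteq> 0"
proof -
  have QP: "Q * P \<in> carrier_mat a a" using P Q by simp
  have PQP: "P * (Q * P) \<in> carrier_mat r a" using P QP by simp
  have "M = (P * Q) * (P * Q)" using idem MPQ by simp
  also have "\<dots> = P * (Q * (P * Q))" using assoc_mult_mat[OF P Q, of "P * Q" r] P Q by simp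
  also have "Q * (P * Q) = (Q * P) * Q" using assoc_mult_mat[OF Q P Q] by simp
  also have "P * ((Q * P) * Q) = (P * (Q * P)) * Q" using assoc_mult_mat[OF P QP Q] by simp
  finally have MM: "M = P * (Q * P) * Q" .
  have "rank_mat M \<le> rank_mat (P * (Q * P))"
    unfolding MM by (rule rank_mat_mult_left[OF PQP Q])
  also have "\<dots> \<le> rank_mat (Q * P)" using rank_mat_mult_right[OF P QP] .
  finally have "a \<le> rank_mat (Q * P)" using ra by simp
  moreover have "rank_mat (Q * P) \<le> a" using rank_mat_le_col[OF QP] .
  ultimately show ?thesis using rank_mat_det_iff[OF QP] by simp
qed

lemma cancel_inv:
  assumes G: "(G :: real mat) \<in> carrier_mat a a" and H: "H \<in> carrier_mat b b"
    and X: "X \<in> carrier_mat a b"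
    and dG: "det G \<noteq> 0" and dH: "det H \<noteq> 0" and eq: "G * X * H = 0\<^sub>m a b"
  shows "X = 0\<^sub>m a b"
proof -
  obtain Gi where Gi: "Gi \<in> carrier_mat a a" "Gi * G = 1\<^sub>m a" using inverse_exists[OF G dG] by blast
  obtain Hi where Hi: "Hi \<in> carrier_mat b b" "H * Hi = 1\<^sub>m b" using inverse_exists[OF H dH] by blast
  have GX: "G * X \<in> carrier_mat a b" using G X by simp
  have "Gi * (G * X * H) * Hi = Gi * (G * X * H * Hi)"
    using assoc_mult_mat[OF Gi(1) _ Hi(1), of "G * X * H"] G X H by simp
  also have "G * X * H * Hi = G * X * (H * Hi)" using assoc_mult_mat[OF GX H Hi(1)] .
  also have "\<dots> = G * X" using Hi(2) right_mult_one_mat[OF GX] by simp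
  also have "Gi * (G * X) = (Gi * G) * X" using assoc_mult_mat[OF Gi(1) G X] by simp
  also have "\<dots> = X" using Gi(2) left_mult_one_mat[OF X] by simp
  finally have "X = Gi * (G * X * H) * Hi" by simp
  also have "\<dots> = 0\<^sub>m a b" using eq Gi Hi by simp
  finally show ?thesis .
qed


lemma assoc6:
  assumes Q: "Q \<in> carrier_mat n1 n2" and P: "P \<in> carrier_mat n2 n3"
    and Q2: "Q2 \<in> carrier_mat n3 n4" and P2: "P2 \<in> carrier_mat n4 n5"
    and Q3: "Q3 \<in> carrier_mat n5 n6" and P3: "P3 \<in> carrier_mat n6 n7"
  shows "(Q * P) * (Q2 * P2) * (Q3 * P3) = Q * ((P * Q2) * (P2 * Q3)) * P3"
proof -
  have QP: "Q * P \<in> carrier_mat n1 n3" using Q P by simp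
  have QP2: "Q2 * P2 \<in> carrier_mat n3 n5" using Q2 P2 by simp
  have QP3: "Q3 * P3 \<in> carrier_mat n5 n7" using Q3 P3 by simp
  have PQ2: "P * Q2 \<in> carrier_mat n2 n4" using Q2 P by simp
  have PQ3: "P2 * Q3 \<in> carrier_mat n4 n6" using Q3 P2 by simp
  have PQPQ: "(P * Q2) * (P2 * Q3) \<in> carrier_mat n2 n6" using PQ2 PQ3 by simp
  have P2QP3: "P2 * (Q3 * P3) \<in> carrier_mat n4 n7" using P2 QP3 by simp
  have X: "(Q2 * P2) * (Q3 * P3) \<in> carrier_mat n3 n7" using QP2 QP3 by simp
  have e1: "(Q2 * P2) * (Q3 * P3) = Q2 * (P2 * (Q3 * P3))" using assoc_mult_mat[OF Q2 P2 QP3] .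
  have e2: "(P * Q2) * (P2 * (Q3 * P3)) = P * (Q2 * (P2 * (Q3 * P3)))" using assoc_mult_mat[OF P Q2 P2QP3] .
  have "(Q * P) * (Q2 * P2) * (Q3 * P3) = (Q * P) * ((Q2 * P2) * (Q3 * P3))"
    using assoc_mult_mat[OF QP QP2 QP3] .
  also have "\<dots> = Q * (P * ((Q2 * P2) * (Q3 * P3)))" using assoc_mult_mat[OF Q P X] .
  finally have L: "(Q * P) * (Q2 * P2) * (Q3 * P3) = Q * (P * (Q2 * (P2 * (Q3 * P3))))" using e1 by simp
  have "Q * ((P * Q2) * (P2 * Q3)) * P3 = Q * (((P * Q2) * (P2 * Q3)) * P3)"
    using assoc_mult_mat[OF Q PQPQ P3] .
  also have "((P * Q2) * (P2 * Q3)) * P3 = (P * Q2) * ((P2 * Q3) * P3)"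
    using assoc_mult_mat[OF PQ2 PQ3 P3] .
  also have "(P2 * Q3) * P3 = P2 * (Q3 * P3)" using assoc_mult_mat[OF P2 Q3 P3] .
  finally have R: "Q * ((P * Q2) * (P2 * Q3)) * P3 = Q * (P * (Q2 * (P2 * (Q3 * P3))))" using e2 by simp
  show ?thesis using L R by simp
qed

lemma idem_rank_sum:
  assumes W: "(W :: real mat) \<in> carrier_mat r r" and idem: "W * W = W"
  shows "rank_mat W + rank_mat (1\<^sub>m r - W) \<le> r"
proof -
  define a where "a = rank_mat W"
  define b where "b = rank_mat (1\<^sub>m r - W)"
  have I: "(1\<^sub>m r :: real mat) \<in> carrier_mat r r" by simp
  have IW: "1\<^sub>m r - W \<in> carrier_mat r r" using W by simp
  have WIW: "W * (1\<^sub>m r - W) = 0\<^sub>m r r"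
    using mult_minus_distrib_mat'[OF W I W] idem right_mult_one_mat[OF W] W by simp
  have IWW: "(1\<^sub>m r - W) * W = 0\<^sub>m r r"
    using minus_mult_distrib_mat[OF I W W] idem left_mult_one_mat[OF W] W by simp
  have idem2: "(1\<^sub>m r - W) * (1\<^sub>m r - W) = 1\<^sub>m r - W"
  proof -
    have "(1\<^sub>m r - W) * (1\<^sub>m r - W) = (1\<^sub>m r - W) * 1\<^sub>m r - (1\<^sub>m r - W) * W"
      using mult_minus_distrib_mat'[OF IW I W] .
    also have "\<dots> = (1\<^sub>m r - W) - 0\<^sub>m r r" using IWW right_mult_one_mat[OF IW] by simp
    also have "\<dots> = 1\<^sub>m r - W" using W by (intro eq_matI) auto
    finally show ?thesis .
  qed
  obtain P Q where P: "P \<in> carrier_mat r a" and Q: "Q \<in> carrier_mat a r" and WPQ: "W = P * Q"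
    using rank_mat_factor[OF W] unfolding a_def by blast
  obtain P' Q' where P': "P' \<in> carrier_mat r b" and Q': "Q' \<in> carrier_mat b r" and WPQ': "1\<^sub>m r - W = P' * Q'"
    using rank_mat_factor[OF IW] unfolding b_def by blast
  have dG: "det (Q * P) \<noteq> 0" using idem_factor_det[OF W idem P Q WPQ] a_def by simp
  have dH: "det (Q' * P') \<noteq> 0" using idem_factor_det[OF IW idem2 P' Q' WPQ'] b_def by simp
  have QP: "Q * P \<in> carrier_mat a a" and QP': "Q * P' \<in> carrier_mat a b"
    and Q'P: "Q' * P \<in> carrier_mat b a" and Q'P': "Q' * P' \<in> carrier_mat b b" using P Q P' Q' by auto
  have "(Q * P) * (Q * P') * (Q' * P') = Q * ((P * Q) * (P' * Q')) * P'"
    by (rule assoc6[OF Q P Q P' Q' P'])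
  also have "\<dots> = 0\<^sub>m a b" using WIW WPQ WPQ' Q P' by simp
  finally have z1: "Q * P' = 0\<^sub>m a b" using cancel_inv[OF QP Q'P' QP' dG dH] by simp
  have "(Q' * P') * (Q' * P) * (Q * P) = Q' * ((P' * Q') * (P * Q)) * P"
    by (rule assoc6[OF Q' P' Q' P Q P])
  also have "\<dots> = 0\<^sub>m b a" using IWW WPQ WPQ' Q' P by simp
  finally have z2: "Q' * P = 0\<^sub>m b a" using cancel_inv[OF Q'P' QP Q'P dH dG] by simp
  define M1 where "M1 = four_block_mat Q (0\<^sub>m a 0) Q' (0\<^sub>m b 0)"
  define M2 where "M2 = four_block_mat P P' (0\<^sub>m 0 a) (0\<^sub>m 0 b)"
  have M1c: "M1 \<in> carrier_mat (a + b) r" unfolding M1_def using four_block_carrier_mat[OF Q, of "0\<^sub>m b 0" b 0 "0\<^sub>m a 0" Q'] by simp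
  have M2c: "M2 \<in> carrier_mat r (a + b)" unfolding M2_def using four_block_carrier_mat[OF P, of "0\<^sub>m 0 b" 0 b P' "0\<^sub>m 0 a"] by simp
  have "M1 * M2 = four_block_mat (Q * P + 0\<^sub>m a 0 * 0\<^sub>m 0 a) (Q * P' + 0\<^sub>m a 0 * 0\<^sub>m 0 b)
      (Q' * P + 0\<^sub>m b 0 * 0\<^sub>m 0 a) (Q' * P' + 0\<^sub>m b 0 * 0\<^sub>m 0 b)"
    unfolding M1_def M2_def
    by (rule mult_four_block_mat[OF Q _ Q' _ P P']) auto
  also have "\<dots> = four_block_mat (Q * P) (0\<^sub>m a b) (0\<^sub>m b a) (Q' * P')"
    using z1 z2 QP Q'P' by simp
  finally have prod: "M1 * M2 = four_block_mat (Q * P) (0\<^sub>m a b) (0\<^sub>m b a) (Q' * P')" .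
  have "det (M1 * M2) = det (Q * P) * det (Q' * P')"
    unfolding prod by (rule det_four_block_mat_lower_left_zero[OF QP _ refl Q'P']) simp
  hence "det (M1 * M2) \<noteq> 0" using dG dH by simp
  hence "rank_mat (M1 * M2) = a + b" using rank_mat_det_iff[of "M1 * M2" "a + b"] M1c M2c by simp
  moreover have "rank_mat (M1 * M2) \<le> r" using rank_mat_mult_inner[OF M1c M2c] .
  ultimately show ?thesis unfolding a_def b_def by simp
qed

lemma real_self_scalar_zero:
  assumes w: "(w :: real vec) \<in> carrier_vec k" and z: "w \<bullet> w = 0"
  shows "w = 0\<^sub>v k"
proof -
  have "(\<Sum>i\<in>{0..<k}. w $ i * w $ i) = 0" using z w unfolding scalar_prod_def by simp
  hence "\<forall>i\<in>{0..<k}. w $ i * w $ i = 0" by (subst (asm) sum_nonneg_eq_0_iff) auto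
  thus ?thesis using w by (intro eq_vecI) auto
qed

lemma gram_det:
  assumes B: "(B :: real mat) \<in> carrier_mat m k"
    and inj: "\<forall>v \<in> carrier_vec k. B *\<^sub>v v = 0\<^sub>v m \<longrightarrow> v = 0\<^sub>v k"
  shows "det (transpose_mat B * B) \<noteq> 0"
proof
  assume "det (transpose_mat B * B) = 0"
  then obtain v where v: "v \<in> carrier_vec k" "v \<noteq> 0\<^sub>v k" "(transpose_mat B * B) *\<^sub>v v = 0\<^sub>v k"
    using det_0_iff_vec_prod_zero_field[of "transpose_mat B * B" k] B by auto
  have Bv: "B *\<^sub>v v \<in> carrier_vec m" using B v by simp
  have "transpose_mat B *\<^sub>v (B *\<^sub>v v) = 0\<^sub>v k" using v B by simp
  hence "0 = (transpose_mat B *\<^sub>v (B *\<^sub>v v)) \<bullet> v" using v by simp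
  also have "\<dots> = (B *\<^sub>v v) \<bullet> (B *\<^sub>v v)" using transpose_vec_mult_scalar[OF B v(1) Bv] .
  finally have "B *\<^sub>v v = 0\<^sub>v m" using real_self_scalar_zero[OF Bv] by simp
  thus False using inj v by auto
qed

lemma left_projector:
  assumes A: "(A :: real mat) \<in> carrier_mat m n"
  shows "\<exists>L \<in> carrier_mat m m. L * A = A \<and> rank_mat L \<le> rank_mat A"
proof -
  define k where "k = rank_mat A"
  obtain B C where B: "B \<in> carrier_mat m k" and C: "C \<in> carrier_mat k n" and ABC: "A = B * C"
    and inj: "\<forall>v \<in> carrier_vec k. B *\<^sub>v v = 0\<^sub>v m \<longrightarrow> v = 0\<^sub>v k"
    using rank_mat_factor[OF A] unfolding k_def by blast
  have Bt: "transpose_mat B \<in> carrier_mat k m" using B by simp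
  have G: "transpose_mat B * B \<in> carrier_mat k k" using B by simp
  obtain Gi where Gi: "Gi \<in> carrier_mat k k" "Gi * (transpose_mat B * B) = 1\<^sub>m k"
    using inverse_exists[OF G gram_det[OF B inj]] by blast
  have GiBt: "Gi * transpose_mat B \<in> carrier_mat k m" using Gi Bt by simp
  define L where "L = B * (Gi * transpose_mat B)"
  have Lc: "L \<in> carrier_mat m m" unfolding L_def using B GiBt by simp
  have "L * A = B * (Gi * transpose_mat B) * (B * C)" unfolding L_def ABC ..
  also have "\<dots> = B * ((Gi * transpose_mat B) * (B * C))" using assoc_mult_mat[OF B GiBt, of "B * C" n] B C by simp
  also have "(Gi * transpose_mat B) * (B * C) = ((Gi * transpose_mat B) * B) * C"
    using assoc_mult_mat[OF GiBt B C] by simp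
  also have "(Gi * transpose_mat B) * B = Gi * (transpose_mat B * B)" using assoc_mult_mat[OF Gi(1) Bt B] .
  also have "\<dots> = 1\<^sub>m k" using Gi(2) .
  also have "1\<^sub>m k * C = C" using left_mult_one_mat[OF C] .
  finally have "L * A = A" using ABC by simp
  moreover have "rank_mat L \<le> k" unfolding L_def using rank_mat_mult_inner[OF B GiBt] .
  ultimately show ?thesis using Lc unfolding k_def by blast
qed

lemma latlrr_lower:
  assumes X: "X \<in> carrier_mat m n" and feas: "latlrr_feasible m n X Z L E"
  shows "rank_mat (X - E) \<le> rank_mat Z + rank_mat L"
proof -
  have Z: "Z \<in> carrier_mat n n" and L: "L \<in> carrier_mat m m" and E: "E \<in> carrier_mat m n"
    and eq: "X - E = (X - E) * Z + L * (X - E)" using feas unfolding latlrr_feasible_def by auto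
  have D: "X - E \<in> carrier_mat m n" using E by simp
  have "rank_mat (X - E) \<le> rank_mat ((X - E) * Z) + rank_mat (L * (X - E))"
    using rank_mat_add[of "(X - E) * Z" m n "L * (X - E)"] D Z L eq by simp
  also have "\<dots> \<le> rank_mat Z + rank_mat L"
    using rank_mat_mult_right[OF D Z] rank_mat_mult_left[OF L D] by simp
  finally show ?thesis .
qed

lemma mult33:
  assumes a: "a \<in> carrier_mat n1 n2" and b: "b \<in> carrier_mat n2 n3" and c: "c \<in> carrier_mat n3 n4"
    and d: "d \<in> carrier_mat n4 n5" and e: "e \<in> carrier_mat n5 n6" and f: "f \<in> carrier_mat n6 n7"
  shows "(a * b * c) * (d * e * f) = a * b * ((c * d) * e) * f"
proof -
  have ab: "a * b \<in> carrier_mat n1 n3" using a b by simp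
  have de: "d * e \<in> carrier_mat n4 n6" using d e by simp
  have def': "d * e * f \<in> carrier_mat n4 n7" using de f by simp
  have cd: "c * d \<in> carrier_mat n3 n5" using c d by simp
  have cde: "c * d * e \<in> carrier_mat n3 n6" using cd e by simp
  have "(a * b * c) * (d * e * f) = (a * b) * (c * (d * e * f))" using assoc_mult_mat[OF ab c def'] .
  also have "c * (d * e * f) = (c * (d * e)) * f" using assoc_mult_mat[OF c de f] by simp
  also have "c * (d * e) = c * d * e" using assoc_mult_mat[OF c d e] by simp
  also have "(a * b) * (c * d * e * f) = a * b * (c * d * e) * f" using assoc_mult_mat[OF ab cde f] by simp
  finally show ?thesis .
qed

lemma diag_inv_mult:
  assumes S: "S \<in> carrier_mat r r" and dg: "diagonal_mat S" and pos: "\<forall>i<r. S $$ (i,i) > 0"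
  shows "diag_inv S * S = 1\<^sub>m r"
proof (rule eq_matI)
  fix i j assume i: "i < dim_row (1\<^sub>m r :: real mat)" and j: "j < dim_col (1\<^sub>m r :: real mat)"
  hence ir: "i < r" and jr: "j < r" by auto
  have "(diag_inv S * S) $$ (i,j) = (\<Sum>k\<in>{0..<r}. diag_inv S $$ (i,k) * S $$ (k,j))"
    using S ir jr unfolding diag_inv_def by (simp add: scalar_prod_def)
  also have "\<dots> = (\<Sum>k\<in>{0..<r}. if k = i then S $$ (i,j) / S $$ (i,i) else 0)"
    using S ir unfolding diag_inv_def by (intro sum.cong) auto
  also have "\<dots> = S $$ (i,j) / S $$ (i,i)" using ir by simp
  also have "\<dots> = 1\<^sub>m r $$ (i,j)" using dg S ir jr pos unfolding diagonal_mat_def by auto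
  finally show "(diag_inv S * S) $$ (i,j) = 1\<^sub>m r $$ (i,j)" .
qed (use S in \<open>auto simp: diag_inv_def\<close>)

lemma part1:
  fixes X :: "real mat"
  assumes X: "X \<in> carrier_mat m n"
    and opt: "rpca_opt m n X lam f A E"
    and svd: "skinny_svd m n (rank_mat A) A U S V"
    and W: "W \<in> carrier_mat (rank_mat A) (rank_mat A)" and idem: "W * W = W"
    and S1: "S1 \<in> carrier_mat n (rank_mat A)" and S2: "S2 \<in> carrier_mat (rank_mat A) m"
    and VS1: "transpose_mat V * S1 = 0\<^sub>m (rank_mat A) (rank_mat A)"
    and S2U: "S2 * U = 0\<^sub>m (rank_mat A) (rank_mat A)"
  shows "latlrr_opt m n X lam f
              (V * W * transpose_mat V + S1 * W * transpose_mat V)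
              (U * S * (1\<^sub>m (rank_mat A) - W) * diag_inv S * transpose_mat U
                 + U * S * (1\<^sub>m (rank_mat A) - W) * S2)
              E"
proof -
  let ?r = "rank_mat A"
  let ?Vt = "transpose_mat V"
  let ?Ut = "transpose_mat U"
  let ?IW = "1\<^sub>m ?r - W"
  let ?Si = "diag_inv S"
  let ?Z = "V * W * ?Vt + S1 * W * ?Vt"
  let ?L = "U * S * ?IW * ?Si * ?Ut + U * S * ?IW * S2"
  have Ac: "A \<in> carrier_mat m n" and U: "U \<in> carrier_mat m ?r" and S: "S \<in> carrier_mat ?r ?r"
    and V: "V \<in> carrier_mat n ?r" and UtU: "?Ut * U = 1\<^sub>m ?r" and VtV: "?Vt * V = 1\<^sub>m ?r"
    and dg: "diagonal_mat S" and pos: "\<forall>i<?r. S $$ (i,i) > 0" and AUSV: "A = U * S * ?Vt"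
    using svd unfolding skinny_svd_def by auto
  have E: "E \<in> carrier_mat m n" and XAE: "X = A + E" using opt unfolding rpca_opt_def rpca_feasible_def by auto
  have Vt: "?Vt \<in> carrier_mat ?r n" and Ut: "?Ut \<in> carrier_mat ?r m" using U V by auto
  have IW: "?IW \<in> carrier_mat ?r ?r" using W by simp
  have Si: "?Si \<in> carrier_mat ?r ?r" using S unfolding diag_inv_def by auto
  have SiS: "?Si * S = 1\<^sub>m ?r" using diag_inv_mult[OF S dg pos] .
  have US: "U * S \<in> carrier_mat m ?r" using U S by simp
  have USIW: "U * S * ?IW \<in> carrier_mat m ?r" using US IW by simp
  have USW: "U * S * W \<in> carrier_mat m ?r" using US W by simp
  have VW: "V * W \<in> carrier_mat n ?r" using V W by simp
  have S1W: "S1 * W \<in> carrier_mat n ?r" using S1 W by simp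
  have VWVt: "V * W * ?Vt \<in> carrier_mat n n" using VW Vt by simp
  have S1WVt: "S1 * W * ?Vt \<in> carrier_mat n n" using S1W Vt by simp
  have SiUt: "?Si * ?Ut \<in> carrier_mat ?r m" using Si Ut by simp
  have L1: "U * S * ?IW * ?Si * ?Ut \<in> carrier_mat m m" using USIW Si Ut by simp
  have L2: "U * S * ?IW * S2 \<in> carrier_mat m m" using USIW S2 by simp
  have Zc: "?Z \<in> carrier_mat n n" using VWVt S1WVt by simp
  have Lc: "?L \<in> carrier_mat m m" using L1 L2 by simp
  have XE: "X - E = A" unfolding XAE using Ac E by (intro eq_matI) auto
  have t1: "A * (V * W * ?Vt) = U * S * W * ?Vt"
  proof -
    have "A * (V * W * ?Vt) = U * S * ((?Vt * V) * W) * ?Vt" unfolding AUSV by (rule mult33[OF U S Vt V W Vt])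
    also have "(?Vt * V) * W = W" using VtV left_mult_one_mat[OF W] by simp
    finally show ?thesis .
  qed
  have t2: "A * (S1 * W * ?Vt) = 0\<^sub>m m n"
  proof -
    have "A * (S1 * W * ?Vt) = U * S * ((?Vt * S1) * W) * ?Vt" unfolding AUSV by (rule mult33[OF U S Vt S1 W Vt])
    also have "(?Vt * S1) * W = 0\<^sub>m ?r ?r" using VS1 left_mult_zero_mat[OF W] by simp
    also have "U * S * 0\<^sub>m ?r ?r = 0\<^sub>m m ?r" using right_mult_zero_mat[OF US] .
    also have "0\<^sub>m m ?r * ?Vt = 0\<^sub>m m n" using left_mult_zero_mat[OF Vt] .
    finally show ?thesis .
  qed
  have t3: "(U * S * ?IW * ?Si * ?Ut) * A = U * S * ?IW * ?Vt"
  proof -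
    have "(U * S * ?IW * ?Si * ?Ut) * A = U * S * ?IW * ?Si * ((?Ut * U) * S) * ?Vt"
      using mult33[OF USIW Si Ut U S Vt] unfolding AUSV[symmetric] .
    also have "(?Ut * U) * S = S" using UtU left_mult_one_mat[OF S] by simp
    also have "U * S * ?IW * ?Si * S = U * S * ?IW * (?Si * S)" using assoc_mult_mat[OF USIW Si S] .
    also have "\<dots> = U * S * ?IW" using SiS right_mult_one_mat[OF USIW] by simp
    finally show ?thesis .
  qed
  have t4: "(U * S * ?IW * S2) * A = 0\<^sub>m m n"
  proof -
    have "(U * S * ?IW * S2) * A = U * S * ?IW * ((S2 * U) * S) * ?Vt"
      using mult33[OF US IW S2 U S Vt] unfolding AUSV[symmetric] .
    also have "(S2 * U) * S = 0\<^sub>m ?r ?r" using S2U left_mult_zero_mat[OF S] by simp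
    also have "U * S * ?IW * 0\<^sub>m ?r ?r = 0\<^sub>m m ?r" using right_mult_zero_mat[OF USIW] .
    also have "0\<^sub>m m ?r * ?Vt = 0\<^sub>m m n" using left_mult_zero_mat[OF Vt] .
    finally show ?thesis .
  qed
  have USWVt: "U * S * W * ?Vt \<in> carrier_mat m n" using USW Vt by simp
  have USIWVt: "U * S * ?IW * ?Vt \<in> carrier_mat m n" using USIW Vt by simp
  have "A * ?Z + ?L * A = (A * (V * W * ?Vt) + A * (S1 * W * ?Vt))
      + ((U * S * ?IW * ?Si * ?Ut) * A + (U * S * ?IW * S2) * A)"
    using mult_add_distrib_mat[OF Ac VWVt S1WVt] add_mult_distrib_mat[OF L1 L2 Ac] by simp
  also have "\<dots> = U * S * W * ?Vt + U * S * ?IW * ?Vt"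
    unfolding t1 t2 t3 t4 using USWVt USIWVt by simp
  also have "\<dots> = (U * S * W + U * S * ?IW) * ?Vt" using add_mult_distrib_mat[OF USW USIW Vt] by simp
  also have "U * S * W + U * S * ?IW = U * S * (W + ?IW)" using mult_add_distrib_mat[OF US W IW] by simp
  also have "W + ?IW = 1\<^sub>m ?r" using W by (intro eq_matI) auto
  also have "U * S * 1\<^sub>m ?r = U * S" using right_mult_one_mat[OF US] .
  finally have feq: "A * ?Z + ?L * A = A" using AUSV by simp
  have feas: "latlrr_feasible m n X ?Z ?L E"
    unfolding latlrr_feasible_def using Zc Lc E XE feq by simp
  have "?Z = (V * W + S1 * W) * ?Vt" using add_mult_distrib_mat[OF VW S1W Vt] by simp
  also have "V * W + S1 * W = (V + S1) * W" using add_mult_distrib_mat[OF V S1 W] by simp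
  finally have Zeq: "?Z = (V + S1) * W * ?Vt" .
  have VS1: "V + S1 \<in> carrier_mat n ?r" using V S1 by simp
  have VS1W: "(V + S1) * W \<in> carrier_mat n ?r" using VS1 W by simp
  have rZ: "rank_mat ?Z \<le> rank_mat W"
    unfolding Zeq using rank_mat_mult_left[OF VS1W Vt] rank_mat_mult_right[OF VS1 W] by linarith
  have "U * S * ?IW * ?Si * ?Ut = (U * S * ?IW) * (?Si * ?Ut)" using assoc_mult_mat[OF USIW Si Ut] .
  hence "?L = (U * S * ?IW) * (?Si * ?Ut) + (U * S * ?IW) * S2" by simp
  also have "\<dots> = (U * S * ?IW) * (?Si * ?Ut + S2)" using mult_add_distrib_mat[OF USIW SiUt S2] by simp
  finally have Leq: "?L = (U * S * ?IW) * (?Si * ?Ut + S2)" .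
  have SS: "?Si * ?Ut + S2 \<in> carrier_mat ?r m" using SiUt S2 by simp
  have rL: "rank_mat ?L \<le> rank_mat ?IW"
    unfolding Leq using rank_mat_mult_left[OF USIW SS] rank_mat_mult_right[OF US IW] by linarith
  have rsum: "rank_mat ?Z + rank_mat ?L \<le> ?r" using rZ rL idem_rank_sum[OF W idem] by linarith
  have "\<forall>Z' L' E'. latlrr_feasible m n X Z' L' E' \<longrightarrow> latlrr_obj lam f ?Z ?L E \<le> latlrr_obj lam f Z' L' E'"
  proof (intro allI impI)
    fix Z' L' E' assume f': "latlrr_feasible m n X Z' L' E'"
    have E': "E' \<in> carrier_mat m n" using f' unfolding latlrr_feasible_def by auto
    have "rpca_feasible m n X (X - E') E'" unfolding rpca_feasible_def using X E'
      by (auto intro!: eq_matI)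
    hence "rpca_obj lam f A E \<le> rpca_obj lam f (X - E') E'" using opt unfolding rpca_opt_def by blast
    hence "real ?r + lam * f E \<le> real (rank_mat (X - E')) + lam * f E'" unfolding rpca_obj_def .
    moreover have "rank_mat (X - E') \<le> rank_mat Z' + rank_mat L'" using latlrr_lower[OF X f'] .
    ultimately show "latlrr_obj lam f ?Z ?L E \<le> latlrr_obj lam f Z' L' E'"
      unfolding latlrr_obj_def using rsum by linarith
  qed
  thus ?thesis unfolding latlrr_opt_def using feas by blast
qed

lemma part2:
  fixes X :: "real mat"
  assumes X: "X \<in> carrier_mat m n"
    and opt: "latlrr_opt m n X lam f Z L E"
  shows "rpca_opt m n X lam f (X - E) E"
proof -
  have f: "latlrr_feasible m n X Z L E" using opt unfolding latlrr_opt_def by blast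
  have E: "E \<in> carrier_mat m n" using f unfolding latlrr_feasible_def by auto
  have feas: "rpca_feasible m n X (X - E) E" unfolding rpca_feasible_def using X E
    by (auto intro!: eq_matI)
  have "\<forall>A' E'. rpca_feasible m n X A' E' \<longrightarrow> rpca_obj lam f (X - E) E \<le> rpca_obj lam f A' E'"
  proof (intro allI impI)
    fix A' E' assume f': "rpca_feasible m n X A' E'"
    have A': "A' \<in> carrier_mat m n" and E': "E' \<in> carrier_mat m n" and XAE: "X = A' + E'"
      using f' unfolding rpca_feasible_def by auto
    obtain L' where L': "L' \<in> carrier_mat m m" "L' * A' = A'" "rank_mat L' \<le> rank_mat A'"
      using left_projector[OF A'] by blast
    have XE': "X - E' = A'" unfolding XAE using A' E' by (intro eq_matI) auto
    have "A' = A' * 0\<^sub>m n n + L' * A'" using L' A' by simp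
    hence f2: "latlrr_feasible m n X (0\<^sub>m n n) L' E'"
      unfolding latlrr_feasible_def using XE' L' E' by simp
    hence "latlrr_obj lam f Z L E \<le> latlrr_obj lam f (0\<^sub>m n n) L' E'" using opt unfolding latlrr_opt_def by blast
    moreover have "rank_mat (X - E) \<le> rank_mat Z + rank_mat L" using latlrr_lower[OF X f] .
    ultimately show "rpca_obj lam f (X - E) E \<le> rpca_obj lam f A' E'"
      unfolding latlrr_obj_def rpca_obj_def using L'(3) rank_mat_zero[of n n] by linarith
  qed
  thus ?thesis unfolding rpca_opt_def using feas by blast
qed

theorem theorem3:
  fixes m n :: nat and X :: "real mat" and lam :: real and f :: "real mat \<Rightarrow> real"
  assumes X: "X \<in> carrier_mat m n"
    and lam: "lam > 0"
  shows "(\<forall>A E U S V W S1 S2.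
            rpca_opt m n X lam f A E \<longrightarrow>
            skinny_svd m n (rank_mat A) A U S V \<longrightarrow>
            W \<in> carrier_mat (rank_mat A) (rank_mat A) \<longrightarrow> W * W = W \<longrightarrow>
            S1 \<in> carrier_mat n (rank_mat A) \<longrightarrow> S2 \<in> carrier_mat (rank_mat A) m \<longrightarrow>
            transpose_mat V * S1 = 0\<^sub>m (rank_mat A) (rank_mat A) \<longrightarrow>
            S2 * U = 0\<^sub>m (rank_mat A) (rank_mat A) \<longrightarrow>
            rank_mat S1 \<le> rank_mat W \<longrightarrow>
            rank_mat S2 \<le> rank_mat (1\<^sub>m (rank_mat A) - W) \<longrightarrow>
            latlrr_opt m n X lam f
              (V * W * transpose_mat V + S1 * W * transpose_mat V)
              (U * S * (1\<^sub>m (rank_mat A) - W) * diag_inv S * transpose_mat U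
                 + U * S * (1\<^sub>m (rank_mat A) - W) * S2)
              E)
       \<and> (\<forall>Z L E. latlrr_opt m n X lam f Z L E \<longrightarrow> rpca_opt m n X lam f (X - E) E)"
  using part1[OF X] part2[OF X] by blast

end
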